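(* Let $m\ge1$, $\zeta=\zeta_m$ a primitive $m$th root of unity, $t=1-\zeta$, $W^{(0)}_m=\prod_{j\in[0,m-1]}\mathbb{Z}[\zeta]$, and \[ W^{(1)}_m=\Bigl\{(y_j)_{j\in[0,m-1]}\in W^{(0)}_m\;\Bigm|\;\sum_{j\in[0,i]}(-1)^j\binom{i}{j}y_j\equiv0\pmod{t^i\mathbb{Z}[\zeta]}\ \text{for all }i\in[0,m-1]\Bigr\}. \] Let $C_m$ be cyclic with generator $c$ and $\omega_m\colon\mathbb{Z}[\zeta]C_m\to W^{(0)}_m$, $c\mapsto(\zeta^j)_{j\in[0,m-1]}$, the cyclic Wedderburn embedding. Then: (i) the image of $\omega_m$ is contained in $W^{(1)}_m$; (ii) the elements $\xi_{m,i}:=\bigl((-1)^it^i\binom{j}{i}\bigr)_{j\in[0,m-1]}$, $i\in[0,m-1]$, form a $\mathbb{Z}[\zeta]$-linear basis of $W^{(1)}_m$; (iii) there are $\mathbb{Z}[\zeta]$-bases of $W^{(1)}_m$ and $W^{(0)}_m$ with respect to which the inclusion $W^{(1)}_m\subseteq W^{(0)}_m$ is diagonal with diagonal entries $t^0,t^1,\dots,t^{m-1}$ (its $(i+1)$st elementary divisor is $t^i$); (iv) the $\mathbb{Z}[\zeta]$-linear determinant of the inclusion $W^{(1)}_m\subseteq W^{(0)}_m$ is $t^{m(m-1)/2}$ (up to a unit).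
   Context: $\binom{j}{i}=0$ if $i>j$. $[a,b]=\{x\in\mathbb{Z}:a\le x\le b\}$. *)

theory Defs
  imports Complex_Main "HOL-Computational_Algebra.Polynomial" "Jordan_Normal_Form.Determinant"
begin

definition Zz :: "complex \<Rightarrow> complex set" where
  "Zz \<zeta> = {poly (map_poly of_int p) \<zeta> | p :: int poly. True}"

definition primitive_root :: "nat \<Rightarrow> complex \<Rightarrow> bool" where
  "primitive_root m \<zeta> \<longleftrightarrow> \<zeta> ^ m = 1 \<and> (\<forall>k. 0 < k \<longrightarrow> k < m \<longrightarrow> \<zeta> ^ k \<noteq> 1)"

definition W0 :: "nat \<Rightarrow> complex \<Rightarrow> (nat \<Rightarrow> complex) set" where
  "W0 m \<zeta> = {y. (\<forall>j<m. y j \<in> Zz \<zeta>) \<and> (\<forall>j\<ge>m. y j = 0)}"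

definition cong0_mod :: "complex \<Rightarrow> complex \<Rightarrow> complex \<Rightarrow> bool" where
  "cong0_mod \<zeta> a d \<longleftrightarrow> (\<exists>z\<in>Zz \<zeta>. a = d * z)"

definition W1 :: "nat \<Rightarrow> complex \<Rightarrow> (nat \<Rightarrow> complex) set" where
  "W1 m \<zeta> = {y \<in> W0 m \<zeta>. \<forall>i<m.
      cong0_mod \<zeta> (\<Sum>j\<le>i. (-1) ^ j * of_nat (i choose j) * y j) ((1 - \<zeta>) ^ i)}"

text \<open>Cyclic Wedderburn embedding: the group ring element sum_{k<m} a_k c^k
  (coefficients a_k in Z[zeta]) is mapped to (sum_k a_k zeta^(j k))_j.\<close>
definition omega :: "nat \<Rightarrow> complex \<Rightarrow> (nat \<Rightarrow> complex) \<Rightarrow> (nat \<Rightarrow> complex)" where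
  "omega m \<zeta> a = (\<lambda>j. if j < m then (\<Sum>k<m. a k * \<zeta> ^ (j * k)) else 0)"

definition group_ring :: "nat \<Rightarrow> complex \<Rightarrow> (nat \<Rightarrow> complex) set" where
  "group_ring m \<zeta> = {a. (\<forall>k<m. a k \<in> Zz \<zeta>)}"

definition lincomb :: "nat \<Rightarrow> (nat \<Rightarrow> complex) \<Rightarrow> (nat \<Rightarrow> nat \<Rightarrow> complex) \<Rightarrow> (nat \<Rightarrow> complex)" where
  "lincomb m a v = (\<lambda>j. \<Sum>i<m. a i * v i j)"

definition is_basis :: "nat \<Rightarrow> complex \<Rightarrow> (nat \<Rightarrow> complex) set \<Rightarrow> (nat \<Rightarrow> nat \<Rightarrow> complex) \<Rightarrow> bool" where
  "is_basis m \<zeta> M v \<longleftrightarrow> (\<forall>i<m. v i \<in> M) \<and>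
     (\<forall>y\<in>M. \<exists>!a. (\<forall>i<m. a i \<in> Zz \<zeta>) \<and> (\<forall>i\<ge>m. a i = 0) \<and> y = lincomb m a v)"

definition xi :: "nat \<Rightarrow> complex \<Rightarrow> nat \<Rightarrow> nat \<Rightarrow> complex" where
  "xi m \<zeta> i = (\<lambda>j. if j < m then (-1) ^ i * (1 - \<zeta>) ^ i * of_nat (j choose i) else 0)"

definition is_unit_Zz :: "complex \<Rightarrow> complex \<Rightarrow> bool" where
  "is_unit_Zz \<zeta> u \<longleftrightarrow> u \<in> Zz \<zeta> \<and> (\<exists>v\<in>Zz \<zeta>. u * v = 1)"

end

theory Submission
  imports Defs
begin


lemma mp_add: "map_poly (of_int::int\<Rightarrow>complex) (p+q) = map_poly of_int p + map_poly of_int q"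
  by (rule poly_eqI) (simp add: coeff_map_poly)
lemma mp_uminus: "map_poly (of_int::int\<Rightarrow>complex) (-q) = - map_poly of_int q"
  by (rule poly_eqI) (simp add: coeff_map_poly)
lemma mp_mult: "map_poly (of_int::int\<Rightarrow>complex) (p*q) = map_poly of_int p * map_poly of_int q"
  by (rule poly_eqI) (simp add: coeff_map_poly coeff_mult)

lemma Zz_add: "x \<in> Zz z \<Longrightarrow> y \<in> Zz z \<Longrightarrow> x + y \<in> Zz z"
  unfolding Zz_def by clarsimp (metis mp_add poly_add)
lemma Zz_mult: "x \<in> Zz z \<Longrightarrow> y \<in> Zz z \<Longrightarrow> x * y \<in> Zz z"
  unfolding Zz_def by clarsimp (metis mp_mult poly_mult)
lemma Zz_uminus: "x \<in> Zz z \<Longrightarrow> - x \<in> Zz z"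
  unfolding Zz_def by clarsimp (metis mp_uminus poly_minus)
lemma Zz_diff: "x \<in> Zz z \<Longrightarrow> y \<in> Zz z \<Longrightarrow> x - y \<in> Zz z"
  using Zz_add[of x z "-y"] Zz_uminus[of y z] by simp
lemma Zz_of_int: "of_int k \<in> Zz z"
  unfolding Zz_def by (rule CollectI, rule exI[of _ "[:k:]"]) (simp add: map_poly_pCons)
lemma Zz_0: "0 \<in> Zz z" using Zz_of_int[of 0 z] by simp
lemma Zz_1: "1 \<in> Zz z" using Zz_of_int[of 1 z] by simp
lemma Zz_of_nat: "of_nat k \<in> Zz z" using Zz_of_int[of "int k" z] by simp
lemma Zz_gen: "z \<in> Zz z"
  unfolding Zz_def by (rule CollectI, rule exI[of _ "[:0,1:]"]) (simp add: map_poly_pCons)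
lemma Zz_power: "x \<in> Zz z \<Longrightarrow> x ^ n \<in> Zz z"
  by (induction n) (auto intro: Zz_1 Zz_mult)
lemma Zz_sum: "(\<And>i. i \<in> A \<Longrightarrow> f i \<in> Zz z) \<Longrightarrow> sum f A \<in> Zz z"
  by (induction A rule: infinite_finite_induct) (auto intro: Zz_0 Zz_add)
lemma Zz_prod: "(\<And>i. i \<in> A \<Longrightarrow> f i \<in> Zz z) \<Longrightarrow> prod f A \<in> Zz z"
  by (induction A rule: infinite_finite_induct) (auto intro: Zz_1 Zz_mult)
lemma Zz_m1pow: "(-1::complex) ^ n \<in> Zz z"
  by (intro Zz_power Zz_uminus Zz_1)

lemma det_Zz:
  assumes "\<And>i k. i < m \<Longrightarrow> k < m \<Longrightarrow> A i k \<in> Zz z"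
  shows "det (mat m m (\<lambda>(i, k). A i k)) \<in> Zz z"
  unfolding det_def
  apply (simp)
  apply (intro Zz_sum Zz_mult Zz_prod)
  apply (simp add: sign_def Zz_1 Zz_uminus)
  using assms by simp

definition Tr :: "(nat \<Rightarrow> complex) \<Rightarrow> nat \<Rightarrow> complex" where
  "Tr y i = (\<Sum>j\<le>i. (-1) ^ j * of_nat (i choose j) * y j)"

lemma K_int: "(\<Sum>i\<le>j. (-1::int)^i * int (j choose i) * ((-1)^k * int (i choose k))) = (if k = j then 1 else 0)"
proof (cases "k \<le> j")
  case False
  then have "\<And>i. i \<le> j \<Longrightarrow> (i choose k) = 0" by simp
  then show ?thesis using False by (auto intro!: sum.neutral)
next
  case True
  have "(\<Sum>i\<le>j. (-1::int)^i * int (j choose i) * ((-1)^k * int (i choose k)))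
     = (\<Sum>i\<in>{k..j}. (-1::int)^i * int (j choose i) * ((-1)^k * int (i choose k)))"
    by (rule sum.mono_neutral_right) auto
  also have "\<dots> = (\<Sum>i\<in>{k..j}. int (j choose k) * ((-1)^(i-k) * int ((j-k) choose (i-k))))"
  proof (rule sum.cong)
    fix i assume i: "i \<in> {k..j}"
    then have "(j choose i) * (i choose k) = (j choose k) * ((j - k) choose (i - k))"
      by (intro choose_mult) auto
    moreover have "(-1::int)^i * (-1)^k = (-1)^(i-k)"
    proof -
      have "(-1::int)^i = (-1)^(i-k) * (-1)^k" using i by (simp flip: power_add)
      moreover have "(-1::int)^k * (-1)^k = 1" by (simp flip: power_add)
      ultimately show ?thesis by (simp add: mult.assoc)
    qed
    ultimately show "(-1::int)^i * int (j choose i) * ((-1)^k * int (i choose k)) = int (j choose k) * ((-1)^(i-k) * int ((j-k) choose (i-k)))"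
      by (metis (no_types, lifting) mult.assoc mult.commute of_nat_mult)
  qed simp
  also have "\<dots> = int (j choose k) * (\<Sum>i\<in>{k..j}. (-1)^(i-k) * int ((j-k) choose (i-k)))"
    by (simp add: sum_distrib_left)
  also have "(\<Sum>i\<in>{k..j}. (-1::int)^(i-k) * int ((j-k) choose (i-k))) = (\<Sum>l\<le>j-k. (-1)^l * int ((j-k) choose l))"
    using True
    by (intro sum.reindex_bij_witness[of _ "\<lambda>l. l + k" "\<lambda>i. i - k"]) auto
  also have "\<dots> = (if j - k = 0 then 1 else 0)"
    using choose_alternating_sum[of "j-k", where 'a=int] by (cases "j-k = 0") simp_all
  finally show ?thesis using True by auto
qed

lemma K: "(\<Sum>i\<le>j. (-1::complex)^i * of_nat (j choose i) * ((-1)^k * of_nat (i choose k))) = (if k = j then 1 else 0)"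
proof -
  have "of_int (\<Sum>i\<le>j. (-1::int)^i * int (j choose i) * ((-1)^k * int (i choose k))) = (if k = j then (1::complex) else 0)"
    by (subst K_int) simp
  then show ?thesis by simp
qed

lemma Tr_local: "(\<And>k. k \<le> i \<Longrightarrow> y k = y' k) \<Longrightarrow> Tr y i = Tr y' i"
  unfolding Tr_def by (intro sum.cong) auto

lemma Tr_Tr: "Tr (Tr y) j = y j"
proof -
  have "Tr (Tr y) j = (\<Sum>i\<le>j. (-1)^i * of_nat (j choose i) * (\<Sum>k\<le>j. (-1)^k * of_nat (i choose k) * y k))"
    unfolding Tr_def
  proof (intro sum.cong refl)
    fix i assume "i \<in> {..j}"
    then have "(\<Sum>k\<le>i. (-1)^k * of_nat (i choose k) * y k) = (\<Sum>k\<le>j. (-1::complex)^k * of_nat (i choose k) * y k)"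
      by (intro sum.mono_neutral_left) auto
    then show "(-1)^i * of_nat (j choose i) * (\<Sum>k\<le>i. (-1)^k * of_nat (i choose k) * y k) = (-1)^i * of_nat (j choose i) * (\<Sum>k\<le>j. (-1::complex)^k * of_nat (i choose k) * y k)"
      by simp
  qed
  also have "\<dots> = (\<Sum>k\<le>j. y k * (\<Sum>i\<le>j. (-1::complex)^i * of_nat (j choose i) * ((-1)^k * of_nat (i choose k))))"
  proof -
    have "(\<Sum>i\<le>j. (-1)^i * of_nat (j choose i) * (\<Sum>k\<le>j. (-1)^k * of_nat (i choose k) * y k))
       = (\<Sum>i\<le>j. \<Sum>k\<le>j. y k * ((-1::complex)^i * of_nat (j choose i) * ((-1)^k * of_nat (i choose k))))"
      by (simp add: sum_distrib_left mult_ac)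
    also have "\<dots> = (\<Sum>k\<le>j. \<Sum>i\<le>j. y k * ((-1::complex)^i * of_nat (j choose i) * ((-1)^k * of_nat (i choose k))))"
      by (rule sum.swap)
    also have "\<dots> = (\<Sum>k\<le>j. y k * (\<Sum>i\<le>j. (-1::complex)^i * of_nat (j choose i) * ((-1)^k * of_nat (i choose k))))"
      by (simp add: sum_distrib_left)
    finally show ?thesis .
  qed
  also have "\<dots> = (\<Sum>k\<le>j. y k * (if k = j then 1 else 0))"
    by (simp only: K)
  also have "\<dots> = (\<Sum>k\<le>j. if k = j then y k else 0)" by (intro sum.cong) auto
  also have "\<dots> = y j" by simp
  finally show ?thesis .
qed

definition g :: "nat \<Rightarrow> complex \<Rightarrow> nat \<Rightarrow> nat \<Rightarrow> complex" where
  "g m c i = (\<lambda>j. if j < m then (-1) ^ i * c ^ i * of_nat (j choose i) else 0)"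

lemma lincomb_g: "lincomb m a (g m c) j = (if j < m then Tr (\<lambda>i. c ^ i * a i) j else 0)"
proof (cases "j < m")
  case True
  have "lincomb m a (g m c) j = (\<Sum>i<m. a i * ((-1) ^ i * c ^ i * of_nat (j choose i)))"
    using True by (simp add: lincomb_def g_def)
  also have "\<dots> = (\<Sum>i\<le>j. a i * ((-1) ^ i * c ^ i * of_nat (j choose i)))"
    using True by (intro sum.mono_neutral_right) auto
  also have "\<dots> = Tr (\<lambda>i. c ^ i * a i) j"
    unfolding Tr_def by (intro sum.cong) (auto simp: mult_ac)
  finally show ?thesis using True by simp
qed (simp add: lincomb_def g_def)

lemma Tr_lincomb_g: "k < m \<Longrightarrow> Tr (lincomb m a (g m c)) k = c ^ k * a k"
proof -
  assume k: "k < m"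
  have "Tr (lincomb m a (g m c)) k = Tr (Tr (\<lambda>i. c ^ i * a i)) k"
    using k by (intro Tr_local) (simp add: lincomb_g)
  then show ?thesis by (simp add: Tr_Tr)
qed

lemma indep_g:
  assumes "\<forall>i<m. c ^ i \<noteq> 0" "lincomb m a (g m c) = lincomb m a' (g m c)" "i < m"
  shows "a i = a' i"
proof -
  have "c ^ i * a i = c ^ i * a' i" using Tr_lincomb_g[of i m a c] Tr_lincomb_g[of i m a' c] assms(2,3) by metis
  moreover have "c ^ i \<noteq> 0" using assms(1,3) by blast
  ultimately show ?thesis by (metis mult_left_cancel)
qed

definition Mset :: "nat \<Rightarrow> complex \<Rightarrow> complex \<Rightarrow> (nat \<Rightarrow> complex) set" where
  "Mset m z c = {y \<in> W0 m z. \<forall>i<m. \<exists>w\<in>Zz z. Tr y i = c ^ i * w}"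

lemma Tr_Zz: "(\<And>j. j \<le> i \<Longrightarrow> y j \<in> Zz z) \<Longrightarrow> Tr y i \<in> Zz z"
  unfolding Tr_def by (intro Zz_sum Zz_mult Zz_m1pow Zz_of_nat) auto

lemma basis_g:
  assumes c: "c \<in> Zz z" and nz: "\<forall>i<m. c ^ i \<noteq> 0"
  shows "is_basis m z (Mset m z c) (g m c)"
  unfolding is_basis_def
proof (intro conjI allI impI ballI)
  fix i assume i: "i < m"
  have "g m c i \<in> W0 m z"
    unfolding W0_def g_def using c by (auto intro!: Zz_mult Zz_m1pow Zz_power Zz_of_nat Zz_0)
  moreover have "g m c i = lincomb m (\<lambda>n. if n = i then 1 else 0) (g m c)"
  proof
    fix j
    have "lincomb m (\<lambda>n. if n = i then 1 else 0) (g m c) j = (\<Sum>n<m. if n = i then g m c i j else 0)"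
      unfolding lincomb_def by (intro sum.cong) auto
    then show "g m c i j = lincomb m (\<lambda>n. if n = i then 1 else 0) (g m c) j" using i by simp
  qed
  then have "\<forall>k<m. \<exists>w\<in>Zz z. Tr (g m c i) k = c ^ k * w"
  proof (intro allI impI)
    fix k assume k: "k < m"
    assume eq: "g m c i = lincomb m (\<lambda>n. if n = i then 1 else 0) (g m c)"
    have "Tr (g m c i) k = c ^ k * (if k = i then 1 else 0)"
      by (subst eq) (rule Tr_lincomb_g[OF k])
    moreover have "(if k = i then 1 else 0) \<in> Zz z" by (simp add: Zz_0 Zz_1)
    ultimately show "\<exists>w\<in>Zz z. Tr (g m c i) k = c ^ k * w" by blast
  qed
  ultimately show "g m c i \<in> Mset m z c" unfolding Mset_def by blast
next
  fix y assume y: "y \<in> Mset m z c"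
  then have yW: "y \<in> W0 m z" and "\<forall>i<m. \<exists>w\<in>Zz z. Tr y i = c ^ i * w" unfolding Mset_def by auto
  then have "\<forall>i. \<exists>w. i < m \<longrightarrow> w \<in> Zz z \<and> Tr y i = c ^ i * w" by blast
  from choice[OF this] obtain w where w: "\<forall>i<m. w i \<in> Zz z \<and> Tr y i = c ^ i * w i" by blast
  define a where "a = (\<lambda>i. if i < m then w i else 0)"
  show "\<exists>!a. (\<forall>i<m. a i \<in> Zz z) \<and> (\<forall>i\<ge>m. a i = 0) \<and> y = lincomb m a (g m c)"
  proof (rule ex1I[of _ a])
    have "y = lincomb m a (g m c)"
    proof
      fix j
      show "y j = lincomb m a (g m c) j"
      proof (cases "j < m")
        case True
        have "Tr (\<lambda>i. c ^ i * a i) j = Tr (Tr y) j"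
          using True w by (intro Tr_local) (simp add: a_def)
        then show ?thesis using True by (simp add: lincomb_g Tr_Tr)
      next
        case False then show ?thesis using yW by (simp add: lincomb_g W0_def)
      qed
    qed
    then show "(\<forall>i<m. a i \<in> Zz z) \<and> (\<forall>i\<ge>m. a i = 0) \<and> y = lincomb m a (g m c)"
      using w by (simp add: a_def)
  next
    fix a' assume a': "(\<forall>i<m. a' i \<in> Zz z) \<and> (\<forall>i\<ge>m. a' i = 0) \<and> y = lincomb m a' (g m c)"
    show "a' = a"
    proof
      fix i show "a' i = a i"
      proof (cases "i < m")
        case True
        have "c ^ i * a' i = c ^ i * w i"
          using Tr_lincomb_g[OF True, of a' c] a' w True by auto
        moreover have "c ^ i \<noteq> 0" using nz True by blast
        ultimately show ?thesis using True by (auto simp: a_def)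
      qed (use a' in \<open>simp add: a_def\<close>)
    qed
  qed
qed

lemma t_pow_nz:
  assumes "primitive_root m z" "i < m"
  shows "(1 - z) ^ i \<noteq> 0"
proof (cases "i = 0")
  case False
  then have m1: "1 < m" using assms(2) by linarith
  have pr: "\<forall>k. 0 < k \<longrightarrow> k < m \<longrightarrow> z ^ k \<noteq> 1" using assms(1) unfolding primitive_root_def by (rule conjunct2)
  have "z ^ 1 \<noteq> 1" using m1 by (intro pr[rule_format]) simp_all
  then have "1 - z \<noteq> 0" by simp
  then show ?thesis by (rule power_not_zero)
qed simp

lemma W1_eq: "W1 m z = Mset m z (1 - z)"
  unfolding W1_def Mset_def cong0_mod_def Tr_def by (rule refl)

lemma W0_eq: "W0 m z = Mset m z 1"
proof
  show "W0 m z \<subseteq> Mset m z 1"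
  proof
    fix y assume y: "y \<in> W0 m z"
    have "\<forall>i<m. \<exists>w\<in>Zz z. Tr y i = 1 ^ i * w"
    proof (intro allI impI)
      fix i assume i: "i < m"
      have "Tr y i \<in> Zz z" by (rule Tr_Zz) (use y i in \<open>simp add: W0_def\<close>)
      then show "\<exists>w\<in>Zz z. Tr y i = 1 ^ i * w" by simp
    qed
    then show "y \<in> Mset m z 1" using y unfolding Mset_def by blast
  qed
qed (simp add: Mset_def)

lemma xi_eq: "xi m z = g m (1 - z)"
  unfolding xi_def g_def by (intro ext) simp

lemma Zz_t: "1 - z \<in> Zz z" by (intro Zz_diff Zz_1 Zz_gen)

lemma binom_alt: "(1 - x::complex) ^ i = (\<Sum>j\<le>i. (-1) ^ j * of_nat (i choose j) * x ^ j)"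
proof -
  have "(1 - x) ^ i = (-x + 1) ^ i" by (simp only: diff_conv_add_uminus add.commute)
  also have "\<dots> = (\<Sum>j\<le>i. of_nat (i choose j) * (-x) ^ j * 1 ^ (i - j))"
    by (rule binomial_ring)
  also have "\<dots> = (\<Sum>j\<le>i. (-1) ^ j * of_nat (i choose j) * x ^ j)"
  proof (intro sum.cong refl)
    fix j
    have "(-x) ^ j = (-1) ^ j * x ^ j" by (rule power_minus)
    then show "of_nat (i choose j) * (-x) ^ j * 1 ^ (i - j) = (-1) ^ j * of_nat (i choose j) * (x::complex) ^ j"
      by (simp only: power_one mult_1_right mult_1_left mult.left_commute mult.commute)
  qed
  finally show ?thesis .
qed



lemma pow_comm: "(x::complex) ^ (a * b) = (x ^ b) ^ a"
  by (metis power_mult mult.commute)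

lemma swap_lemma: "(\<Sum>j\<in>A. c j * (\<Sum>k\<in>B. a k * w j k)) = (\<Sum>k\<in>B. (a k::complex) * (\<Sum>j\<in>A. c j * w j k))"
  unfolding sum_distrib_left by (subst sum.swap) (simp add: mult.left_commute)

lemma binom_inner: "(\<Sum>j\<le>i. (-1) ^ j * of_nat (i choose j) * (z::complex) ^ (j * k)) = (1 - z ^ k) ^ (i::nat)"
  unfolding binom_alt by (intro sum.cong refl) (simp only: pow_comm)

lemma part1:
  assumes a: "a \<in> group_ring m z"
  shows "omega m z a \<in> W1 m z"
proof -
  let ?y = "omega m z a"
  have az: "\<And>k. k < m \<Longrightarrow> a k \<in> Zz z" using a by (simp add: group_ring_def)
  have "?y \<in> W0 m z"
    unfolding W0_def omega_def using az by (auto intro!: Zz_sum Zz_mult Zz_power Zz_gen)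
  moreover have "\<forall>i<m. \<exists>w\<in>Zz z. Tr ?y i = (1 - z) ^ i * w"
  proof (intro allI impI)
    fix i assume i: "i < m"
    let ?s = "\<lambda>k. (\<Sum>l<k. z ^ l)"
    have "Tr ?y i = (\<Sum>j\<le>i. (-1) ^ j * of_nat (i choose j) * (\<Sum>k<m. a k * z ^ (j * k)))"
      unfolding Tr_def omega_def using i by (intro sum.cong refl) auto
    also have "\<dots> = (\<Sum>k<m. a k * (\<Sum>j\<le>i. (-1) ^ j * of_nat (i choose j) * z ^ (j * k)))"
      by (rule swap_lemma)
    also have "\<dots> = (\<Sum>k<m. a k * (1 - z ^ k) ^ i)"
      by (simp only: binom_inner)
    also have "\<dots> = (1 - z) ^ i * (\<Sum>k<m. a k * ?s k ^ i)"
    proof -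
      have pk: "(1 - z ^ k) ^ i = (1 - z) ^ i * (\<Sum>l<k. z ^ l) ^ i" for k
        by (simp only: one_diff_power_eq power_mult_distrib)
      show ?thesis by (simp only: pk) (simp add: sum_distrib_left mult_ac)
    qed
    finally have "Tr ?y i = (1 - z) ^ i * (\<Sum>k<m. a k * ?s k ^ i)" .
    moreover have "(\<Sum>k<m. a k * ?s k ^ i) \<in> Zz z"
      using az by (auto intro!: Zz_sum Zz_mult Zz_power Zz_gen)
    ultimately show "\<exists>w\<in>Zz z. Tr ?y i = (1 - z) ^ i * w" by blast
  qed
  ultimately show ?thesis unfolding W1_eq Mset_def by blast
qed




definition MM :: "nat \<Rightarrow> (nat \<Rightarrow> nat \<Rightarrow> complex) \<Rightarrow> complex mat" where
  "MM m X = mat m m (\<lambda>(i, k). X i k)"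

lemma MM_carrier: "MM m X \<in> carrier_mat m m"
  unfolding MM_def by simp

lemma MM_mult: "MM m X * MM m Y = MM m (\<lambda>i n. \<Sum>l<m. X i l * Y l n)"
  unfolding MM_def
  by (rule eq_matI) (auto simp: scalar_prod_def lessThan_atLeast0 intro!: sum.cong)

lemma MM_cong: "(\<And>i k. i < m \<Longrightarrow> k < m \<Longrightarrow> X i k = Y i k) \<Longrightarrow> MM m X = MM m Y"
  unfolding MM_def by (rule eq_matI) auto

lemma det_MM_mult: "det (MM m X) * det (MM m Y) = det (MM m (\<lambda>i n. \<Sum>l<m. X i l * Y l n))"
  by (simp add: det_mult[OF MM_carrier MM_carrier, symmetric] MM_mult)

lemma det_MM_one: "(\<And>i k. i < m \<Longrightarrow> k < m \<Longrightarrow> X i k = (if i = k then 1 else 0)) \<Longrightarrow> det (MM m X) = 1"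
proof -
  assume "\<And>i k. i < m \<Longrightarrow> k < m \<Longrightarrow> X i k = (if i = k then 1 else 0)"
  then have "MM m X = 1\<^sub>m m" unfolding MM_def by (intro eq_matI) auto
  then show ?thesis by simp
qed

lemma det_MM_diag: "det (MM m (\<lambda>i k. if i = k then d k else 0)) = (\<Prod>k<m. d k)"
proof -
  have "det (MM m (\<lambda>i k. if i = k then d k else 0)) = prod_list (diag_mat (MM m (\<lambda>i k. if i = k then d k else 0)))"
    by (rule det_upper_triangular[OF _ MM_carrier]) (auto simp: MM_def upper_triangular_def)
  also have "\<dots> = (\<Prod>k<m. d k)"
    by (simp add: prod_list_diag_prod MM_def lessThan_atLeast0)
  finally show ?thesis .
qed

lemma det_MM_Zz: "(\<And>i k. i < m \<Longrightarrow> k < m \<Longrightarrow> X i k \<in> Zz z) \<Longrightarrow> det (MM m X) \<in> Zz z"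
  unfolding MM_def by (rule det_Zz)

lemma lincomb_comp:
  assumes "\<forall>l<m. w l = lincomb m (Y l) u"
  shows "lincomb m x w = lincomb m (\<lambda>n. \<Sum>l<m. x l * Y l n) u"
proof
  fix j
  have "lincomb m x w j = (\<Sum>l<m. x l * (\<Sum>n<m. Y l n * u n j))"
    unfolding lincomb_def using assms by (intro sum.cong refl) (simp add: lincomb_def)
  also have "\<dots> = (\<Sum>n<m. (\<Sum>l<m. x l * Y l n) * u n j)"
    by (simp add: sum_distrib_left sum_distrib_right mult.assoc) (rule sum.swap)
  finally show "lincomb m x w j = lincomb m (\<lambda>n. \<Sum>l<m. x l * Y l n) u j"
    by (simp add: lincomb_def)
qed

lemma coords:
  assumes "is_basis m z M v" "\<forall>i<m. u i \<in> M"
  shows "\<exists>X. \<forall>i<m. (\<forall>k<m. X i k \<in> Zz z) \<and> u i = lincomb m (X i) v"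
proof -
  have B: "\<forall>y\<in>M. \<exists>!a. (\<forall>i<m. a i \<in> Zz z) \<and> (\<forall>i\<ge>m. a i = 0) \<and> y = lincomb m a v"
    using assms(1) unfolding is_basis_def by (rule conjunct2)
  have "\<exists>x. i < m \<longrightarrow> (\<forall>k<m. x k \<in> Zz z) \<and> u i = lincomb m x v" for i
  proof (cases "i < m")
    case True
    then have "u i \<in> M" using assms(2) by simp
    with B have "\<exists>!a. (\<forall>i<m. a i \<in> Zz z) \<and> (\<forall>i\<ge>m. a i = 0) \<and> u i = lincomb m a v" by (rule bspec)
    then obtain a where "(\<forall>i<m. a i \<in> Zz z) \<and> (\<forall>i\<ge>m. a i = 0) \<and> u i = lincomb m a v" by (rule ex1E)
    then show ?thesis by auto
  qed simp
  then have "\<forall>i. \<exists>x. i < m \<longrightarrow> (\<forall>k<m. x k \<in> Zz z) \<and> u i = lincomb m x v" by blast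
  from choice[OF this] show ?thesis by blast
qed

lemma sum_upto2: "2 * (\<Sum>k<m. k) = m * (m - (1::nat))"
proof (induction m)
  case (Suc m)
  have "2 * (\<Sum>k<Suc m. k) = 2 * (\<Sum>k<m. k) + 2 * m" by simp
  also have "\<dots> = m * (m - 1) + 2 * m" using Suc by simp
  also have "\<dots> = Suc m * (Suc m - 1)" by (cases m) (simp_all add: algebra_simps)
  finally show ?case .
qed simp

lemma sum_upto: "(\<Sum>k<m. k) = m * (m - 1) div (2::nat)"
  using sum_upto2[of m] by simp




lemma g_scale: "lincomb m a (g m c) = lincomb m (\<lambda>n. a n * c ^ n) (g m 1)"
  unfolding lincomb_def g_def by (intro ext sum.cong refl) (simp add: mult_ac)

lemma g_delta: "i < m \<Longrightarrow> g m c i = lincomb m (\<lambda>n. if n = i then 1 else 0) (g m c)"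
proof
  fix j assume i: "i < m"
  have "lincomb m (\<lambda>n. if n = i then 1 else 0) (g m c) j = (\<Sum>n<m. if n = i then g m c i j else 0)"
    unfolding lincomb_def by (intro sum.cong) auto
  then show "g m c i j = lincomb m (\<lambda>n. if n = i then 1 else 0) (g m c) j" using i by simp
qed

lemma sum_delta_mult: "n < (m::nat) \<Longrightarrow> (\<Sum>l<m. P l * (if l = n then d else 0)) = P n * (d::complex)"
proof -
  assume n: "n < m"
  have "(\<Sum>l<m. P l * (if l = n then d else 0)) = (\<Sum>l<m. if l = n then P n * d else 0)"
    by (intro sum.cong) auto
  also have "\<dots> = P n * d" using n by (subst sum.delta) auto
  finally show ?thesis .
qed

lemma inverse_pair:
  assumes nz: "\<forall>i<m. c ^ i \<noteq> 0"
    and X: "\<forall>k<m. g m c k = lincomb m (X k) w"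
    and Y: "\<forall>l<m. w l = lincomb m (Y l) (g m c)"
  shows "det (MM m X) * det (MM m Y) = 1"
proof -
  have "(\<Sum>l<m. X k l * Y l n) = (if k = n then 1 else 0)" if k: "k < m" and n: "n < m" for k n
  proof -
    have "lincomb m (\<lambda>n. if n = k then 1 else 0) (g m c) = g m c k" using g_delta[OF k] by simp
    also have "\<dots> = lincomb m (X k) w" using X k by simp
    also have "\<dots> = lincomb m (\<lambda>n. \<Sum>l<m. X k l * Y l n) (g m c)"
      by (rule lincomb_comp[OF Y])
    finally have "(if n = k then 1 else 0) = (\<Sum>l<m. X k l * Y l n)"
      using indep_g[OF nz _ n] by blast
    then show ?thesis by auto
  qed
  then show ?thesis by (simp add: det_MM_mult det_MM_one)
qed




theorem lemma3p18:
  fixes m :: nat and \<zeta> :: complex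
  assumes "m \<ge> 1" and "primitive_root m \<zeta>"
  shows "omega m \<zeta> ` group_ring m \<zeta> \<subseteq> W1 m \<zeta>
    \<and> is_basis m \<zeta> (W1 m \<zeta>) (xi m \<zeta>)
    \<and> (\<exists>b e. is_basis m \<zeta> (W1 m \<zeta>) b \<and> is_basis m \<zeta> (W0 m \<zeta>) e \<and>
               (\<forall>i<m. b i = (\<lambda>j. (1 - \<zeta>) ^ i * e i j)))
    \<and> (\<forall>b e A. is_basis m \<zeta> (W1 m \<zeta>) b \<longrightarrow> is_basis m \<zeta> (W0 m \<zeta>) e \<longrightarrow>
           (\<forall>i<m. \<forall>k<m. A i k \<in> Zz \<zeta>) \<longrightarrow>
           (\<forall>i<m. b i = (\<lambda>j. \<Sum>k<m. A i k * e k j)) \<longrightarrow>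
           (\<exists>u. is_unit_Zz \<zeta> u \<and>
              det (mat m m (\<lambda>(i, k). A i k)) = (1 - \<zeta>) ^ (m * (m - 1) div 2) * u))"
proof -
  define t where "t = 1 - \<zeta>"
  have nz: "\<forall>i<m. t ^ i \<noteq> 0" unfolding t_def using t_pow_nz[OF assms(2)] by blast
  have nz1: "\<forall>i<m. (1::complex) ^ i \<noteq> 0" by simp
  have bxi: "is_basis m \<zeta> (W1 m \<zeta>) (g m t)"
    unfolding W1_eq t_def by (rule basis_g[OF Zz_t nz[unfolded t_def]])
  have be0: "is_basis m \<zeta> (W0 m \<zeta>) (g m 1)"
    unfolding W0_eq by (rule basis_g[OF Zz_1 nz1])
  have xiW1: "\<forall>i<m. g m t i \<in> W1 m \<zeta>" using bxi unfolding is_basis_def by blast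
  have e0W0: "\<forall>i<m. g m 1 i \<in> W0 m \<zeta>" using be0 unfolding is_basis_def by blast
  have P1: "omega m \<zeta> ` group_ring m \<zeta> \<subseteq> W1 m \<zeta>" using part1 by blast
  have P2: "is_basis m \<zeta> (W1 m \<zeta>) (xi m \<zeta>)" using bxi by (simp add: xi_eq t_def)
  have P3: "\<exists>b e. is_basis m \<zeta> (W1 m \<zeta>) b \<and> is_basis m \<zeta> (W0 m \<zeta>) e \<and>
               (\<forall>i<m. b i = (\<lambda>j. (1 - \<zeta>) ^ i * e i j))"
  proof (intro exI conjI)
    show "is_basis m \<zeta> (W1 m \<zeta>) (g m t)" by (rule bxi)
    show "is_basis m \<zeta> (W0 m \<zeta>) (g m 1)" by (rule be0)
    show "\<forall>i<m. g m t i = (\<lambda>j. (1 - \<zeta>) ^ i * g m 1 i j)"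
      by (auto simp: g_def t_def)
  qed
  have P4: "\<forall>b e A. is_basis m \<zeta> (W1 m \<zeta>) b \<longrightarrow> is_basis m \<zeta> (W0 m \<zeta>) e \<longrightarrow>
           (\<forall>i<m. \<forall>k<m. A i k \<in> Zz \<zeta>) \<longrightarrow>
           (\<forall>i<m. b i = (\<lambda>j. \<Sum>k<m. A i k * e k j)) \<longrightarrow>
           (\<exists>u. is_unit_Zz \<zeta> u \<and>
              det (mat m m (\<lambda>(i, k). A i k)) = (1 - \<zeta>) ^ (m * (m - 1) div 2) * u)"
  proof (intro allI impI)
    fix b e A
    assume hb: "is_basis m \<zeta> (W1 m \<zeta>) b" and he: "is_basis m \<zeta> (W0 m \<zeta>) e"
      and hA: "\<forall>i<m. \<forall>k<m. A i k \<in> Zz \<zeta>" and hbA: "\<forall>i<m. b i = (\<lambda>j. \<Sum>k<m. A i k * e k j)"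
    have bW1: "\<forall>i<m. b i \<in> W1 m \<zeta>" using hb unfolding is_basis_def by blast
    have eW0: "\<forall>i<m. e i \<in> W0 m \<zeta>" using he unfolding is_basis_def by blast
    obtain P where P: "\<forall>i<m. (\<forall>k<m. P i k \<in> Zz \<zeta>) \<and> b i = lincomb m (P i) (g m t)"
      using coords[OF bxi bW1] by blast
    obtain P' where P': "\<forall>i<m. (\<forall>k<m. P' i k \<in> Zz \<zeta>) \<and> g m t i = lincomb m (P' i) b"
      using coords[OF hb xiW1] by blast
    obtain Q where Q: "\<forall>i<m. (\<forall>k<m. Q i k \<in> Zz \<zeta>) \<and> e i = lincomb m (Q i) (g m 1)"
      using coords[OF be0 eW0] by blast
    obtain Q' where Q': "\<forall>i<m. (\<forall>k<m. Q' i k \<in> Zz \<zeta>) \<and> g m 1 i = lincomb m (Q' i) e"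
      using coords[OF he e0W0] by blast
    have PP: "det (MM m P') * det (MM m P) = 1"
      by (rule inverse_pair[OF nz]) (use P P' in auto)
    have QQ: "det (MM m Q') * det (MM m Q) = 1"
      by (rule inverse_pair[OF nz1]) (use Q Q' in auto)
    define D where "D = (\<lambda>l n. if l = n then t ^ n else (0::complex))"
    have AQ: "(\<Sum>l<m. A i l * Q l n) = (\<Sum>l<m. P i l * D l n)" if i: "i < m" and n: "n < m" for i n
    proof -
      have "lincomb m (\<lambda>n. \<Sum>l<m. A i l * Q l n) (g m 1) = lincomb m (A i) e"
        by (rule lincomb_comp[symmetric]) (use Q in auto)
      also have "\<dots> = b i" using hbA i by (simp add: lincomb_def)
      also have "\<dots> = lincomb m (P i) (g m t)" using P i by simp
      also have "\<dots> = lincomb m (\<lambda>n. P i n * t ^ n) (g m 1)" by (rule g_scale)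
      finally have "(\<Sum>l<m. A i l * Q l n) = P i n * t ^ n"
        using indep_g[OF nz1 _ n] by blast
      also have "\<dots> = (\<Sum>l<m. P i l * D l n)"
        unfolding D_def by (rule sum_delta_mult[OF n, symmetric])
      finally show ?thesis .
    qed
    have "det (MM m A) * det (MM m Q) = det (MM m P) * det (MM m D)"
      unfolding det_MM_mult by (rule arg_cong[where f=det], rule MM_cong) (use AQ in auto)
    also have "det (MM m D) = (\<Prod>k<m. t ^ k)" unfolding D_def by (rule det_MM_diag)
    also have "\<dots> = t ^ (\<Sum>k<m. k)" by (rule power_sum[symmetric])
    also have "\<dots> = t ^ (m * (m - 1) div 2)" by (simp only: sum_upto)
    finally have eq: "det (MM m A) * det (MM m Q) = det (MM m P) * t ^ (m * (m - 1) div 2)" .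
    define u where "u = det (MM m P) * det (MM m Q')"
    have "det (MM m A) = det (MM m A) * (det (MM m Q') * det (MM m Q))" using QQ by simp
    also have "\<dots> = (det (MM m A) * det (MM m Q)) * det (MM m Q')" by (simp add: mult_ac)
    also have "\<dots> = t ^ (m * (m - 1) div 2) * u" unfolding eq u_def by (simp add: mult_ac)
    finally have detA: "det (MM m A) = t ^ (m * (m - 1) div 2) * u" .
    have "is_unit_Zz \<zeta> u"
      unfolding is_unit_Zz_def
    proof
      show "u \<in> Zz \<zeta>" unfolding u_def
        by (intro Zz_mult det_MM_Zz) (use P Q' in auto)
      show "\<exists>v\<in>Zz \<zeta>. u * v = 1"
      proof
        show "det (MM m P') * det (MM m Q) \<in> Zz \<zeta>"
          by (intro Zz_mult det_MM_Zz) (use P' Q in auto)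
        show "u * (det (MM m P') * det (MM m Q)) = 1"
          unfolding u_def using PP QQ
          by (metis (no_types, lifting) mult.assoc mult.commute mult_1_right)
      qed
    qed
    then show "\<exists>u. is_unit_Zz \<zeta> u \<and> det (mat m m (\<lambda>(i, k). A i k)) = (1 - \<zeta>) ^ (m * (m - 1) div 2) * u"
      using detA unfolding MM_def t_def by blast
  qed
  show ?thesis using P1 P2 P3 P4 by blast
qed


end
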